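(* Let $I$ be an irreducible numerical semigroup. Then (1) the height of the tree $\mathrm{G}([\theta(I),I])$ equals $\#(I\setminus\theta(I))$; (2) if $S$ belongs to the $n$-level of $\mathrm{G}([\theta(I),I])$, then $\mathrm{l}(S)=2n+\mathrm{l}(I)$; (3) $\{\mathrm{l}(S)\mid S\in[\theta(I),I]\}=\{2n+\mathrm{l}(I)\mid n\in\{0,1,\ldots,\#(I\setminus\theta(I))\}\}$.
   Context: A numerical semigroup is a subset $S\subseteq\mathbb{N}$ closed under addition with $0\in S$ and $\mathbb{N}\setminus S$ finite; $\mathrm{F}(S)=\max(\mathbb{Z}\setminus S)$; $\langle X\rangle$ is the submonoid generated by $X$. Irreducible: not the intersection of two numerical semigroups properly containing it. $\mathrm{N}(S)=\{s\in S\mid s<\mathrm{F}(S)\}$, $\mathrm{L}(S)=\{x\in\mathbb{N}\setminus S\mid \mathrm{F}(S)-x\notin \mathrm{N}(S)\}$, $\mathrm{l}(S)=\#\mathrm{L}(S)$. $\Delta(S)=\{s\in S\mid s<\frac{\mathrm{F}(S)}{2}\}$ and $\theta(S)=\langle\Delta(S)\rangle\cup\{\mathrm{F}(S)+1,\mathrm{F}(S)+2,\ldots\}$. For numerical semigroups $A\subseteq B$, $[A,B]$ is the set of numerical semigroups $X$ with $A\subseteq X\subseteq B$; $\mathrm{F}_B(X)=\max(B\setminus X)$ if $X\subsetneq B$, $\mathrm{F}_B(B)=-1$. $\mathrm{G}([A,B])$ has vertex set $[A,B]$ and an edge $(X,Y)$ whenever $X\cup\{\mathrm{F}_B(X)\}=Y$;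 it is a rooted tree with root $B$. The depth of a vertex is the number of edges on its unique path to the root, the $n$-level is the set of vertices of depth $n$, and the height is the maximal depth. *)

theory Defs
  imports Main
begin

definition numerical_semigroup :: "nat set \<Rightarrow> bool" where
  "numerical_semigroup S \<longleftrightarrow> 0 \<in> S \<and> (\<forall>x\<in>S. \<forall>y\<in>S. x + y \<in> S) \<and> finite (UNIV - S)"

definition frob :: "nat set \<Rightarrow> int" where
  "frob S = (if UNIV - S = {} then -1 else int (Max (UNIV - S)))"

definition irreducible_ns :: "nat set \<Rightarrow> bool" where
  "irreducible_ns S \<longleftrightarrow> numerical_semigroup S \<and>
     \<not> (\<exists>S1 S2. numerical_semigroup S1 \<and> numerical_semigroup S2 \<and>
          S \<subset> S1 \<and> S \<subset> S2 \<and> S = S1 \<inter> S2)"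

inductive_set monoid_gen :: "nat set \<Rightarrow> nat set" for X :: "nat set" where
  zero: "0 \<in> monoid_gen X"
| gen: "x \<in> X \<Longrightarrow> x \<in> monoid_gen X"
| add: "a \<in> monoid_gen X \<Longrightarrow> b \<in> monoid_gen X \<Longrightarrow> a + b \<in> monoid_gen X"

definition NS :: "nat set \<Rightarrow> nat set" where
  "NS S = {s \<in> S. int s < frob S}"

definition LS :: "nat set \<Rightarrow> nat set" where
  "LS S = {x. x \<notin> S \<and> frob S - int x \<notin> int ` NS S}"

definition lS :: "nat set \<Rightarrow> nat" where
  "lS S = card (LS S)"

definition Delta :: "nat set \<Rightarrow> nat set" where
  "Delta S = {s \<in> S. 2 * int s < frob S}"

definition theta :: "nat set \<Rightarrow> nat set" where
  "theta S = monoid_gen (Delta S) \<union> {x. int x > frob S}"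

definition ns_interval :: "nat set \<Rightarrow> nat set \<Rightarrow> nat set set" where
  "ns_interval A B = {X. numerical_semigroup X \<and> A \<subseteq> X \<and> X \<subseteq> B}"

definition frob_rel :: "nat set \<Rightarrow> nat set \<Rightarrow> int" where
  "frob_rel B X = (if X \<subset> B then int (Max (B - X)) else -1)"

text \<open>Edge (X,Y) of G([A,B]): X \<union> {F_B(X)} = Y (requires X \<noteq> B, as F_B(B) = -1 is not in N).\<close>
definition tree_edge :: "nat set \<Rightarrow> nat set \<Rightarrow> nat set \<Rightarrow> nat set \<Rightarrow> bool" where
  "tree_edge A B X Y \<longleftrightarrow> X \<in> ns_interval A B \<and> Y \<in> ns_interval A B \<and>
     frob_rel B X \<ge> 0 \<and> insert (nat (frob_rel B X)) X = Y"

definition tree_depth :: "nat set \<Rightarrow> nat set \<Rightarrow> nat set \<Rightarrow> nat" where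
  "tree_depth A B X = (LEAST n. \<exists>f. f 0 = X \<and> f n = B \<and> (\<forall>i<n. tree_edge A B (f i) (f (Suc i))))"

definition tree_level :: "nat set \<Rightarrow> nat set \<Rightarrow> nat \<Rightarrow> nat set set" where
  "tree_level A B n = {X \<in> ns_interval A B. tree_depth A B X = n}"

definition tree_height :: "nat set \<Rightarrow> nat set \<Rightarrow> nat" where
  "tree_height A B = Max (tree_depth A B ` ns_interval A B)"

end

theory Submission
  imports Defs
begin

lemma ns_gap:
  assumes "numerical_semigroup I" "I \<noteq> UNIV"
  shows "Max (UNIV - I) \<notin> I" "\<And>x. x > Max (UNIV - I) \<Longrightarrow> x \<in> I"
        "frob I = int (Max (UNIV - I))"
proof -
  have fin: "finite (UNIV - I)" using assms(1) unfolding numerical_semigroup_def by blast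
  have ne: "UNIV - I \<noteq> {}" using assms(2) by blast
  show "Max (UNIV - I) \<notin> I" using Max_in[OF fin ne] by blast
  show "\<And>x. x > Max (UNIV - I) \<Longrightarrow> x \<in> I"
    using Max_ge[OF fin] by (meson DiffI UNIV_I not_le)
  show "frob I = int (Max (UNIV - I))" using ne unfolding frob_def by simp
qed

lemma frob_between:
  assumes "numerical_semigroup I" "I \<noteq> UNIV" "S \<subseteq> I" "{x. x > Max (UNIV - I)} \<subseteq> S"
  shows "frob S = frob I"
proof -
  let ?f = "Max (UNIV - I)"
  have f: "?f \<notin> S" using ns_gap(1)[OF assms(1,2)] assms(3) by blast
  have sub: "UNIV - S \<subseteq> {..?f}" using assms(4) by (auto simp: not_le)
  hence fin: "finite (UNIV - S)" using finite_subset by blast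
  have "Max (UNIV - S) = ?f"
    by (rule Max_eqI[OF fin]) (use sub f in auto)
  thus ?thesis using f ns_gap(3)[OF assms(1,2)] unfolding frob_def by auto
qed

lemma monoid_gen_sub:
  assumes "numerical_semigroup I" "X \<subseteq> I"
  shows "monoid_gen X \<subseteq> I"
proof
  fix x assume "x \<in> monoid_gen X"
  thus "x \<in> I"
    by induction (use assms in \<open>auto simp: numerical_semigroup_def\<close>)
qed

lemma theta_props:
  assumes "numerical_semigroup I"
  shows "theta I \<subseteq> I" "numerical_semigroup (theta I)"
proof -
  have D: "Delta I \<subseteq> I" unfolding Delta_def by blast
  have big: "{x. int x > frob I} \<subseteq> I"
  proof (cases "I = UNIV")
    case False
    thus ?thesis using ns_gap[OF assms False] by auto
  qed auto
  show "theta I \<subseteq> I" unfolding theta_def using monoid_gen_sub[OF assms D] big by blast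
  have fin: "finite (UNIV - theta I)"
  proof -
    have "UNIV - theta I \<subseteq> {..nat (frob I)}" unfolding theta_def by auto
    thus ?thesis using finite_subset by blast
  qed
  show "numerical_semigroup (theta I)"
    unfolding numerical_semigroup_def
  proof (intro conjI ballI fin)
    show "0 \<in> theta I" unfolding theta_def by (auto intro: monoid_gen.zero)
    fix x y assume "x \<in> theta I" "y \<in> theta I"
    thus "x + y \<in> theta I" unfolding theta_def by (auto intro: monoid_gen.add)
  qed
qed

lemma LS_formula:
  assumes "numerical_semigroup I" "I \<noteq> UNIV" "S \<subseteq> I" "{x. x > Max (UNIV - I)} \<subseteq> S"
  shows "lS S = 2 * card (I - S) + lS I"
proof -
  define f where "f = Max (UNIV - I)"
  have fI: "f \<notin> I" and big: "\<And>x. x > f \<Longrightarrow> x \<in> I" and frI: "frob I = int f"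
    using ns_gap[OF assms(1,2)] unfolding f_def by auto
  have frS: "frob S = int f" using frob_between[OF assms] frI by simp
  have closed: "\<And>a b. a \<in> I \<Longrightarrow> b \<in> I \<Longrightarrow> a + b \<in> I"
    using assms(1) unfolding numerical_semigroup_def by blast
  have P: "\<And>y. y \<in> I \<Longrightarrow> y \<le> f \<Longrightarrow> f - y \<notin> I"
    using closed fI by (metis le_add_diff_inverse)
  have ISlt: "\<And>y. y \<in> I - S \<Longrightarrow> y < f"
    using assms(4) fI f_def by (metis DiffE linorder_neqE_nat mem_Collect_eq subsetD)
  have LSI: "LS I = {x. x \<notin> I \<and> int f - int x \<notin> int ` {s \<in> I. s < f}}"
    unfolding LS_def NS_def frI by auto
  have LSS: "LS S = {x. x \<notin> S \<and> int f - int x \<notin> int ` {s \<in> S. s < f}}"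
    unfolding LS_def NS_def frS by auto
  have le: "\<And>x. x \<notin> I \<Longrightarrow> x \<le> f" using big not_le by blast
  have eq: "LS S = LS I \<union> (I - S) \<union> (\<lambda>y. f - y) ` (I - S)"
  proof (intro equalityI subsetI)
    fix x assume x: "x \<in> LS S"
    show "x \<in> LS I \<union> (I - S) \<union> (\<lambda>y. f - y) ` (I - S)"
    proof (cases "x \<in> I")
      case True thus ?thesis using x LSS by auto
    next
      case False
      hence xf: "x \<le> f" using le by blast
      show ?thesis
      proof (cases "x \<in> LS I")
        case True thus ?thesis by blast
      next
        case nL: False
        then obtain s where s: "s \<in> I" "s < f" "int f - int x = int s" using False LSI by auto
        have "s \<notin> S" using x LSS s by auto
        moreover have "x = f - s" using s xf by linarith
        ultimately show ?thesis using s by blast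
      qed
    qed
  next
    fix x assume x: "x \<in> LS I \<union> (I - S) \<union> (\<lambda>y. f - y) ` (I - S)"
    show "x \<in> LS S"
    proof -
      { assume "x \<in> LS I"
        hence ?thesis using LSI LSS assms(3) by auto }
      moreover
      { assume xa: "x \<in> I - S"
        have "int f - int x \<notin> int ` {s \<in> S. s < f}"
        proof
          assume "int f - int x \<in> int ` {s \<in> S. s < f}"
          then obtain s where s: "s \<in> S" "int f - int x = int s" by auto
          hence "x \<le> f" "s = f - x" by linarith+
          thus False using P xa s assms(3) by auto
        qed
        hence ?thesis using xa LSS by auto }
      moreover
      { fix y assume y: "y \<in> I - S" "x = f - y"
        have yf: "y < f" using ISlt y by blast
        have "x \<notin> I" using P y yf by auto
        hence "x \<notin> S" using assms(3) by blast
        moreover have "int f - int x = int y" using y yf by simp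
        moreover have "int y \<notin> int ` {s \<in> S. s < f}" using y by auto
        ultimately have ?thesis using LSS by auto }
      ultimately show ?thesis using x by blast
    qed
  qed
  have finLI: "finite (LS I)"
    by (rule finite_subset[of _ "{..f}"]) (use LSI le in auto)
  have finD: "finite (I - S)"
    by (rule finite_subset[of _ "{..f}"]) (use ISlt in \<open>auto simp: less_imp_le\<close>)
  have inj: "inj_on (\<lambda>y. f - y) (I - S)"
    by (rule inj_onI) (use ISlt in \<open>fastforce\<close>)
  have d1: "LS I \<inter> (I - S) = {}" using LSI by auto
  have d2: "(LS I \<union> (I - S)) \<inter> (\<lambda>y. f - y) ` (I - S) = {}"
  proof -
    { fix y assume y: "y \<in> I - S" "f - y \<in> LS I"
      have yf: "y < f" using ISlt y by blast
      have "int f - int (f - y) = int y" using yf by simp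
      hence False using y LSI yf by auto }
    moreover
    { fix y assume y: "y \<in> I - S" "f - y \<in> I - S"
      hence False using P ISlt by (meson DiffD1 less_imp_le) }
    ultimately show ?thesis by blast
  qed
  have "card (LS S) = card (LS I) + card (I - S) + card ((\<lambda>y. f - y) ` (I - S))"
    unfolding eq using d1 d2 finLI finD
    by (simp add: card_Un_disjoint)
  also have "card ((\<lambda>y. f - y) ` (I - S)) = card (I - S)" using card_image[OF inj] .
  finally show ?thesis unfolding lS_def by simp
qed

lemma fin_diff:
  assumes "numerical_semigroup A" "A \<subseteq> X"
  shows "finite (B - X)"
proof -
  have "B - X \<subseteq> UNIV - A" using assms(2) by blast
  thus ?thesis using assms(1) finite_subset unfolding numerical_semigroup_def by blast
qed

lemma step_in:
  assumes "numerical_semigroup A" "X \<in> ns_interval A B" "X \<noteq> B" and nsB: "numerical_semigroup B"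
  shows "insert (Max (B - X)) X \<in> ns_interval A B"
    "card (B - insert (Max (B - X)) X) = card (B - X) - 1"
    "Max (B - X) \<in> B - X"
proof -
  have XA: "A \<subseteq> X" "X \<subseteq> B" "numerical_semigroup X" using assms(2) unfolding ns_interval_def by auto
  have fin: "finite (B - X)" using fin_diff[OF assms(1) XA(1)] .
  have ne: "B - X \<noteq> {}" using XA(2) assms(3) by blast
  define m where "m = Max (B - X)"
  have m: "m \<in> B" "m \<notin> X" using Max_in[OF fin ne] m_def by auto
  have mge: "\<And>y. y \<in> B \<Longrightarrow> y \<notin> X \<Longrightarrow> y \<le> m" using Max_ge[OF fin] m_def by blast
  show "m \<in> B - X" using m by blast
  have cB: "\<And>a b. a \<in> B \<Longrightarrow> b \<in> B \<Longrightarrow> a + b \<in> B"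
    using nsB unfolding numerical_semigroup_def by blast
  have X0: "0 \<in> X" using XA(3) unfolding numerical_semigroup_def by blast
  have cX: "\<And>a b. a \<in> X \<Longrightarrow> b \<in> X \<Longrightarrow> a + b \<in> X"
    using XA(3) unfolding numerical_semigroup_def by blast
  have mpos: "m > 0" using m X0 by (cases m) auto
  have up: "\<And>z. z \<in> B \<Longrightarrow> z > m \<Longrightarrow> z \<in> X" using mge by (meson not_le)
  have "numerical_semigroup (insert m X)"
    unfolding numerical_semigroup_def
  proof (intro conjI ballI)
    show "0 \<in> insert m X" using X0 by blast
    fix a b assume a: "a \<in> insert m X" and b: "b \<in> insert m X"
    show "a + b \<in> insert m X"
    proof (cases "a \<in> X \<and> b \<in> X")
      case True thus ?thesis using cX by blast
    next
      case False
      have aB: "a \<in> B" "b \<in> B" using a b m XA(2) by auto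
      show ?thesis
      proof (cases "a = 0 \<or> b = 0")
        case True thus ?thesis using a b by auto
      next
        case nz: False
        have "a + b > m" using False a b nz by auto
        thus ?thesis using up cB aB by blast
      qed
    qed
  next
    have "UNIV - insert m X \<subseteq> UNIV - X" by blast
    thus "finite (UNIV - insert m X)" using XA(3) finite_subset unfolding numerical_semigroup_def by blast
  qed
  thus "insert (Max (B - X)) X \<in> ns_interval A B"
    using XA m unfolding ns_interval_def m_def[symmetric] by auto
  have "B - insert m X = (B - X) - {m}" by blast
  thus "card (B - insert (Max (B - X)) X) = card (B - X) - 1"
    using m unfolding m_def[symmetric] by (simp add: fin)
qed

lemma edge_iff:
  assumes "numerical_semigroup A" and nsB: "numerical_semigroup B"
  shows "tree_edge A B X Y \<longleftrightarrow> X \<in> ns_interval A B \<and> X \<noteq> B \<and> Y = insert (Max (B - X)) X"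
proof
  assume e: "tree_edge A B X Y"
  hence X: "X \<in> ns_interval A B" unfolding tree_edge_def by blast
  hence "X \<subseteq> B" unfolding ns_interval_def by blast
  moreover have "frob_rel B X \<ge> 0" using e unfolding tree_edge_def by blast
  ultimately have "X \<subset> B" unfolding frob_rel_def by (auto split: if_splits)
  thus "X \<in> ns_interval A B \<and> X \<noteq> B \<and> Y = insert (Max (B - X)) X"
    using e X unfolding tree_edge_def frob_rel_def by auto
next
  assume h: "X \<in> ns_interval A B \<and> X \<noteq> B \<and> Y = insert (Max (B - X)) X"
  hence "X \<subset> B" unfolding ns_interval_def by blast
  thus "tree_edge A B X Y" using h step_in[OF assms(1) _ _ assms(2)] unfolding tree_edge_def frob_rel_def by auto
qed

lemma path_exists:
  assumes A: "numerical_semigroup A" and nsB: "numerical_semigroup B"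
  shows "X \<in> ns_interval A B \<Longrightarrow> \<exists>f. f 0 = X \<and> f (card (B - X)) = B \<and>
     (\<forall>i<card (B - X). tree_edge A B (f i) (f (Suc i)))"
proof (induction "card (B - X)" arbitrary: X)
  case 0
  have XA: "A \<subseteq> X" "X \<subseteq> B" using 0(2) unfolding ns_interval_def by auto
  have "B - X = {}" using 0(1) fin_diff[OF A XA(1)] by simp
  hence "X = B" using XA by blast
  thus ?case using 0(1) by (intro exI[of _ "\<lambda>_. X"]) simp
next
  case (Suc k)
  have XA: "A \<subseteq> X" using Suc(3) unfolding ns_interval_def by auto
  have XB: "X \<noteq> B" using Suc(2) by (metis Diff_cancel card.empty nat.distinct(1))
  define Y where "Y = insert (Max (B - X)) X"
  have Y: "Y \<in> ns_interval A B" "card (B - Y) = k" using step_in[OF A Suc(3) XB nsB] Suc(2) Y_def by auto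
  obtain g where g: "g 0 = Y" "g k = B" "\<forall>i<k. tree_edge A B (g i) (g (Suc i))"
    using Suc(1)[OF Y(2)[symmetric] Y(1)] Y(2) by auto
  have e0: "tree_edge A B X Y" using edge_iff[OF A nsB] Suc(3) XB Y_def by blast
  show ?case
  proof (intro exI[of _ "\<lambda>i. if i = 0 then X else g (i - 1)"] conjI allI impI)
    fix i assume "i < card (B - X)"
    thus "tree_edge A B (if i = 0 then X else g (i - 1)) (if Suc i = 0 then X else g (Suc i - 1))"
      using g e0 Suc(2) by (cases i) auto
  qed (use g Suc(2)[symmetric] in auto)
qed

lemma path_len:
  assumes A: "numerical_semigroup A" and nsB: "numerical_semigroup B" and f0: "f 0 = X" and X: "X \<in> ns_interval A B"
    and e: "\<forall>i<n. tree_edge A B (f i) (f (Suc i))"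
  shows "i \<le> n \<Longrightarrow> card (B - X) \<le> card (B - f i) + i"
proof (induction i)
  case 0 thus ?case using f0 by simp
next
  case (Suc i)
  have ei: "tree_edge A B (f i) (f (Suc i))" using e Suc(2) by simp
  hence fi: "f i \<in> ns_interval A B" "f i \<noteq> B" "f (Suc i) = insert (Max (B - f i)) (f i)"
    using edge_iff[OF A nsB] by auto
  have "card (B - f (Suc i)) = card (B - f i) - 1" using step_in(2)[OF A fi(1,2) nsB] fi(3) by simp
  moreover have "card (B - f i) > 0"
    using step_in(3)[OF A fi(1,2) nsB] fin_diff[OF A, of "f i" B] fi(1)
    unfolding ns_interval_def by (auto simp: card_gt_0_iff)
  ultimately show ?case using Suc by simp
qed

lemma depth_eq:
  assumes A: "numerical_semigroup A" and nsB: "numerical_semigroup B" and X: "X \<in> ns_interval A B"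
  shows "tree_depth A B X = card (B - X)"
  unfolding tree_depth_def
proof (rule Least_equality)
  show "\<exists>f. f 0 = X \<and> f (card (B - X)) = B \<and> (\<forall>i<card (B - X). tree_edge A B (f i) (f (Suc i)))"
    using path_exists[OF A nsB X] .
next
  fix n assume "\<exists>f. f 0 = X \<and> f n = B \<and> (\<forall>i<n. tree_edge A B (f i) (f (Suc i)))"
  then obtain f where f: "f 0 = X" "f n = B" "\<forall>i<n. tree_edge A B (f i) (f (Suc i))" by blast
  show "card (B - X) \<le> n" using path_len[OF A nsB f(1) X f(3), of n] f(2) by simp
qed

lemma reach:
  assumes A: "numerical_semigroup A" and nsB: "numerical_semigroup B"
  shows "\<forall>X\<in>ns_interval A B. card (B - X) = n + d \<longrightarrow> (\<exists>Y\<in>ns_interval A B. card (B - Y) = n)"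
proof (induction d)
  case 0 thus ?case by auto
next
  case (Suc d)
  show ?case
  proof (intro ballI impI)
    fix X assume X: "X \<in> ns_interval A B" "card (B - X) = n + Suc d"
    hence XB: "X \<noteq> B" by auto
    show "\<exists>Y\<in>ns_interval A B. card (B - Y) = n"
    proof -
      have "card (B - insert (Max (B - X)) X) = n + d" using step_in(2)[OF A X(1) XB nsB] X(2) by simp
      thus ?thesis using Suc step_in(1)[OF A X(1) XB nsB] by blast
    qed
  qed
qed

lemma interval_finite:
  assumes A: "numerical_semigroup A"
  shows "finite (ns_interval A B)"
proof -
  have "ns_interval A B \<subseteq> (\<lambda>Y. A \<union> Y) ` Pow (B - A)"
  proof
    fix X assume "X \<in> ns_interval A B"
    hence "A \<subseteq> X" "X \<subseteq> B" unfolding ns_interval_def by auto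
    hence "X = A \<union> (X - A)" "X - A \<in> Pow (B - A)" by auto
    thus "X \<in> (\<lambda>Y. A \<union> Y) ` Pow (B - A)" by blast
  qed
  thus ?thesis using fin_diff[OF A, of A B] finite_subset by blast
qed

theorem proposition32:
  fixes I :: "nat set"
  assumes "irreducible_ns I"
  shows "tree_height (theta I) I = card (I - theta I) \<and>
    (\<forall>n S. S \<in> tree_level (theta I) I n \<longrightarrow> lS S = 2 * n + lS I) \<and>
    {lS S | S. S \<in> ns_interval (theta I) I} = {2 * n + lS I | n. n \<le> card (I - theta I)}"
proof -
  have nsI: "numerical_semigroup I" using assms unfolding irreducible_ns_def by blast
  note th = theta_props[OF nsI]
  have thi: "theta I \<in> ns_interval (theta I) I" using th nsI unfolding ns_interval_def by blast
  have dep: "\<And>X. X \<in> ns_interval (theta I) I \<Longrightarrow> tree_depth (theta I) I X = card (I - X)"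
    using depth_eq[OF th(2) nsI] by blast
  have lsf: "\<And>S. S \<in> ns_interval (theta I) I \<Longrightarrow> lS S = 2 * card (I - S) + lS I"
  proof -
    fix S assume S: "S \<in> ns_interval (theta I) I"
    hence SI: "theta I \<subseteq> S" "S \<subseteq> I" unfolding ns_interval_def by auto
    show "lS S = 2 * card (I - S) + lS I"
    proof (cases "I = UNIV")
      case True
      hence "frob I = -1" unfolding frob_def by simp
      hence "theta I = UNIV" unfolding theta_def by auto
      hence "S = I" using SI \<open>I = UNIV\<close> by blast
      thus ?thesis by simp
    next
      case False
      have "{x. x > Max (UNIV - I)} \<subseteq> S"
        using SI(1) ns_gap(3)[OF nsI False] unfolding theta_def by auto
      thus ?thesis using LS_formula[OF nsI False SI(2)] by blast
    qed
  qed
  have finI: "finite (I - theta I)" using fin_diff[OF th(2), of "theta I" I] by blast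
  have cm: "\<And>X. X \<in> ns_interval (theta I) I \<Longrightarrow> card (I - X) \<le> card (I - theta I)"
    using finI by (intro card_mono) (auto simp: ns_interval_def)
  have p1: "tree_height (theta I) I = card (I - theta I)"
    unfolding tree_height_def
  proof (rule Max_eqI)
    show "finite (tree_depth (theta I) I ` ns_interval (theta I) I)"
      using interval_finite[OF th(2)] by blast
    show "\<And>y. y \<in> tree_depth (theta I) I ` ns_interval (theta I) I \<Longrightarrow> y \<le> card (I - theta I)"
      using dep cm by auto
    show "card (I - theta I) \<in> tree_depth (theta I) I ` ns_interval (theta I) I"
      using dep[OF thi] thi by (metis image_eqI)
  qed
  have p2: "\<forall>n S. S \<in> tree_level (theta I) I n \<longrightarrow> lS S = 2 * n + lS I"
    using dep lsf unfolding tree_level_def by auto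
  have p3: "{lS S | S. S \<in> ns_interval (theta I) I} = {2 * n + lS I | n. n \<le> card (I - theta I)}"
  proof (intro equalityI subsetI)
    fix x assume "x \<in> {lS S | S. S \<in> ns_interval (theta I) I}"
    then obtain S where "S \<in> ns_interval (theta I) I" "x = lS S" by blast
    thus "x \<in> {2 * n + lS I | n. n \<le> card (I - theta I)}" using lsf cm by blast
  next
    fix x assume "x \<in> {2 * n + lS I | n. n \<le> card (I - theta I)}"
    then obtain n where n: "n \<le> card (I - theta I)" "x = 2 * n + lS I" by blast
    obtain Y where Y: "Y \<in> ns_interval (theta I) I" "card (I - Y) = n"
      using reach[OF th(2) nsI, of n "card (I - theta I) - n"] thi n(1) by auto
    thus "x \<in> {lS S | S. S \<in> ns_interval (theta I) I}" using lsf n(2) by force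
  qed
  show ?thesis using p1 p2 p3 by blast
qed

end
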